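(* Let $N=\{1,2,\dots,n\}$ be a set of players and let $v:2^N\to\mathbb{R}$ be a monotonic characteristic function. Let $x=(x_1,\dots,x_n)$ be a payoff vector, where the players are indexed so that $x_1\le x_2\le\dots\le x_n$. Then $x$ is stable if and only if for every $i\in\{1,\dots,n\}$, $$x_i \;\ge\; v\Big(\bigcup_{j\le i}\{j\}\Big)=v(\{1,2,\dots,i\}).$$
   Context: A characteristic function $v:2^N\to\mathbb{R}$ assigns to each coalition $C\subseteq N$ the value $v(C)$ (e.g. the value of the model learnt from the pooled data of the players in $C$). It is monotonic if $C\subseteq C'$ implies $v(C)\le v(C')$. In this (modified) cooperative game, when the grand coalition $N$ forms, a payoff vector is a vector $x=(x_1,\dots,x_n)\in\mathbb{R}^n$ with $x_i\le v(N)$ for every player $i$ (each player individually receives at most the value created by the coalition; the sum of payoffs is not restricted). A payoff vector $x$ is stable if for every nonempty coalition $C\subseteq N$ there exists a player $k\in C$ with $x_k\ge v(C)$. *)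

theory Defs
  imports Complex_Main
begin

text \<open>Players are N = {1..n}; a characteristic function is v :: nat set => real,
  only its values on subsets of N matter.\<close>

definition monotonic_game :: "nat set \<Rightarrow> (nat set \<Rightarrow> real) \<Rightarrow> bool" where
  "monotonic_game N v \<longleftrightarrow> (\<forall>C C'. C \<subseteq> C' \<and> C' \<subseteq> N \<longrightarrow> v C \<le> v C')"

definition payoff_vector :: "nat set \<Rightarrow> (nat set \<Rightarrow> real) \<Rightarrow> (nat \<Rightarrow> real) \<Rightarrow> bool" where
  "payoff_vector N v x \<longleftrightarrow> (\<forall>i\<in>N. x i \<le> v N)"

definition stable :: "nat set \<Rightarrow> (nat set \<Rightarrow> real) \<Rightarrow> (nat \<Rightarrow> real) \<Rightarrow> bool" where
  "stable N v x \<longleftrightarrow> (\<forall>C. C \<subseteq> N \<and> C \<noteq> {} \<longrightarrow> (\<exists>k\<in>C. x k \<ge> v C))"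

end

theory Submission
  imports Defs
begin

theorem proposition5:
  fixes n :: nat and v :: "nat set \<Rightarrow> real" and x :: "nat \<Rightarrow> real"
  assumes "monotonic_game {1..n} v"
    and "payoff_vector {1..n} v x"
    and "\<forall>i\<in>{1..n}. \<forall>j\<in>{1..n}. i \<le> j \<longrightarrow> x i \<le> x j"
  shows "stable {1..n} v x \<longleftrightarrow> (\<forall>i\<in>{1..n}. x i \<ge> v {1..i})"
proof
  assume st: "stable {1..n} v x"
  show "\<forall>i\<in>{1..n}. x i \<ge> v {1..i}"
  proof
    fix i assume i: "i \<in> {1..n}"
    have "{1..i} \<subseteq> {1..n}" "{1..i} \<noteq> {}" using i by auto
    then obtain k where k: "k \<in> {1..i}" "x k \<ge> v {1..i}"
      using st unfolding stable_def by blast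
    have "x k \<le> x i" using assms(3) k(1) i by auto
    then show "x i \<ge> v {1..i}" using k by linarith
  qed
next
  assume h: "\<forall>i\<in>{1..n}. x i \<ge> v {1..i}"
  show "stable {1..n} v x"
    unfolding stable_def
  proof (intro allI impI)
    fix C assume C: "C \<subseteq> {1..n} \<and> C \<noteq> {}"
    have fin: "finite C" using C finite_subset by blast
    define m where "m = Max C"
    have mC: "m \<in> C" using fin C m_def by simp
    have sub: "C \<subseteq> {1..m}" using fin C m_def by auto
    have mn: "m \<in> {1..n}" using mC C by auto
    have "{1..m} \<subseteq> {1..n}" using mn by auto
    then have "v C \<le> v {1..m}" using assms(1) sub unfolding monotonic_game_def by blast
    then show "\<exists>k\<in>C. x k \<ge> v C" using h mn mC by force
  qed
qed

end
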